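(* Let $G$ be a finite graph obtained by the following growth process. Start from a complete graph $K_{n_0}$ with $n_0\ge 2$ (the initial simplex). At each step, choose an integer $n\ge 2$, choose one of the previously added simplexes $\sigma$ (each simplex being the vertex set of a complete subgraph added at an earlier step, or the initial one), and choose a nonempty subset $S\subseteq\sigma$ with $1\le |S|\le n-1$ (a face of $\sigma$). Then add $n-|S|$ new vertices to the graph, and add edges so that $S$ together with the new vertices induces a complete graph $K_n$; this $K_n$ is recorded as a newly added simplex. No other edges are added. Then $G$ is connected and $\delta(G)\le 1$, i.e. for every four vertices $A,B,C,D$ of $G$ labelled so that $d(A,B)+d(C,D)\le d(A,C)+d(B,D)\le d(A,D)+d(B,C)$ one has $$\frac{\big(d(A,D)+d(B,C)\big)-\big(d(A,C)+d(B,D)\big)}{2}\le 1 .$$ In particular this holds regardless of whether some edges of the attached simplexes are marked as "defect" edges (the marking only changes which faces may be chosen, not the resulting graph).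
   Context: $d(U,V)$ denotes the shortest-path (graph) distance between vertices $U,V$ of $G$. The (Gromov four-point) hyperbolicity parameter $\delta(G)$ of a connected graph $G$ is the maximum, over all quadruples of vertices $A,B,C,D$, of $(\mathcal L-\mathcal M)/2$, where $\mathcal L$ is the largest and $\mathcal M$ the middle of the three sums $d(A,B)+d(C,D)$, $d(A,C)+d(B,D)$, $d(A,D)+d(B,C)$. A simplex of order $q_{max}=n-1$ is a complete graph on $n$ vertices; a face of order $q$ of a simplex is a complete subgraph on $q+1$ of its vertices. *)

theory Defs
  imports Complex_Main
begin

text \<open>A graph is given by a vertex set V and a symmetric irreflexive adjacency relation E.
  The growth process records the graph together with the family of simplexes added so far.\<close>

inductive simplex_growth :: "'a set \<Rightarrow> ('a \<Rightarrow> 'a \<Rightarrow> bool) \<Rightarrow> 'a set set \<Rightarrow> bool" where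
  init: "finite V0 \<Longrightarrow> card V0 \<ge> 2 \<Longrightarrow>
         simplex_growth V0 (\<lambda>x y. x \<in> V0 \<and> y \<in> V0 \<and> x \<noteq> y) {V0}"
| step: "simplex_growth V E Sig \<Longrightarrow> \<sigma> \<in> Sig \<Longrightarrow> S \<subseteq> \<sigma> \<Longrightarrow>
         (n::nat) \<ge> 2 \<Longrightarrow> 1 \<le> card S \<Longrightarrow> card S \<le> n - 1 \<Longrightarrow>
         finite N \<Longrightarrow> N \<inter> V = {} \<Longrightarrow> card N = n - card S \<Longrightarrow>
         simplex_growth (V \<union> N)
           (\<lambda>x y. E x y \<or> (x \<in> S \<union> N \<and> y \<in> S \<union> N \<and> x \<noteq> y))
           (insert (S \<union> N) Sig)"

definition is_walk :: "('a \<Rightarrow> 'a \<Rightarrow> bool) \<Rightarrow> 'a list \<Rightarrow> bool" where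
  "is_walk E p \<longleftrightarrow> p \<noteq> [] \<and> (\<forall>i. Suc i < length p \<longrightarrow> E (p ! i) (p ! Suc i))"

definition connected_graph :: "'a set \<Rightarrow> ('a \<Rightarrow> 'a \<Rightarrow> bool) \<Rightarrow> bool" where
  "connected_graph V E \<longleftrightarrow>
     (\<forall>x\<in>V. \<forall>y\<in>V. \<exists>p. is_walk E p \<and> hd p = x \<and> last p = y)"

definition gdist :: "('a \<Rightarrow> 'a \<Rightarrow> bool) \<Rightarrow> 'a \<Rightarrow> 'a \<Rightarrow> nat" where
  "gdist E x y = (LEAST k. \<exists>p. is_walk E p \<and> hd p = x \<and> last p = y \<and> length p = Suc k)"

end

theory Submission
  imports Defs
begin

inductive reach :: "('a \<Rightarrow> 'a \<Rightarrow> bool) \<Rightarrow> nat \<Rightarrow> 'a \<Rightarrow> 'a \<Rightarrow> bool" for E where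
  r0: "reach E k x x"
| rs: "E x z \<Longrightarrow> reach E k z y \<Longrightarrow> reach E (Suc k) x y"

lemma reach_mono: "reach E k x y \<Longrightarrow> k \<le> k' \<Longrightarrow> reach E k' x y"
proof (induction arbitrary: k' rule: reach.induct)
  case (r0 k x) show ?case by (rule reach.r0)
next
  case (rs x z k y)
  then obtain k'' where "k' = Suc k''" "k \<le> k''" by (cases k') auto
  thus ?case using rs by (auto intro: reach.rs)
qed

lemma reach_trans: "reach E a x y \<Longrightarrow> reach E b y z \<Longrightarrow> reach E (a+b) x z"
proof (induction arbitrary: z rule: reach.induct)
  case (r0 k x) thus ?case using reach_mono by fastforce
next
  case (rs x w k y) thus ?case by (auto intro: reach.rs)
qed

lemma reach_edge: "E x y \<Longrightarrow> reach E (Suc k) x y"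
  by (rule reach.rs) (auto intro: reach.r0)

definition symE :: "('a \<Rightarrow> 'a \<Rightarrow> bool) \<Rightarrow> bool" where
  "symE E \<longleftrightarrow> (\<forall>a b. E a b \<longrightarrow> E b a)"

lemma reach_sym:
  assumes "symE E" shows "reach E k x y \<Longrightarrow> reach E k y x"
proof (induction rule: reach.induct)
  case (r0 k x) show ?case by (rule reach.r0)
next
  case (rs x z k y)
  have "E z x" using rs.hyps(1) assms by (simp add: symE_def)
  hence "reach E (Suc 0) z x" by (rule reach_edge)
  from reach_trans[OF rs.IH this] show ?case by simp
qed

lemma reach_hom:
  assumes "\<And>a b. E' a b \<Longrightarrow> E (h a) (h b) \<or> h a = h b"
  shows "reach E' k x y \<Longrightarrow> reach E k (h x) (h y)"
proof (induction rule: reach.induct)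
  case (r0 k x) show ?case by (rule reach.r0)
next
  case (rs x z k y)
  from assms[OF rs.hyps(1)] show ?case
  proof
    assume "E (h x) (h z)" thus ?thesis using rs.IH by (rule reach.rs)
  next
    assume "h x = h z" thus ?thesis using rs.IH reach_mono by fastforce
  qed
qed

lemma reach_subE:
  assumes "\<And>a b. E a b \<Longrightarrow> E' a b"
  shows "reach E k x y \<Longrightarrow> reach E' k x y"
  by (induction rule: reach.induct) (auto intro: reach.intros assms)

lemma is_walk_Cons: "is_walk E (x # p) \<longleftrightarrow> (p = [] \<or> (E x (hd p) \<and> is_walk E p))"
proof (cases p)
  case Nil thus ?thesis by (simp add: is_walk_def)
next
  case (Cons y q)
  have "(\<forall>i. Suc i < length (x#y#q) \<longrightarrow> E ((x#y#q) ! i) ((x#y#q) ! Suc i)) \<longleftrightarrow>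
        E x y \<and> (\<forall>i. Suc i < length (y#q) \<longrightarrow> E ((y#q) ! i) ((y#q) ! Suc i))"
  proof
    assume h: "\<forall>i. Suc i < length (x#y#q) \<longrightarrow> E ((x#y#q) ! i) ((x#y#q) ! Suc i)"
    show "E x y \<and> (\<forall>i. Suc i < length (y#q) \<longrightarrow> E ((y#q) ! i) ((y#q) ! Suc i))"
    proof
      show "E x y" using h[rule_format, of 0] by simp
      show "\<forall>i. Suc i < length (y#q) \<longrightarrow> E ((y#q) ! i) ((y#q) ! Suc i)"
        using h by (metis Suc_less_eq length_Cons nth_Cons_Suc)
    qed
  next
    assume h: "E x y \<and> (\<forall>i. Suc i < length (y#q) \<longrightarrow> E ((y#q) ! i) ((y#q) ! Suc i))"
    show "\<forall>i. Suc i < length (x#y#q) \<longrightarrow> E ((x#y#q) ! i) ((x#y#q) ! Suc i)"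
    proof (intro allI impI)
      fix i assume "Suc i < length (x#y#q)"
      thus "E ((x#y#q) ! i) ((x#y#q) ! Suc i)" using h by (cases i) auto
    qed
  qed
  thus ?thesis using Cons by (simp add: is_walk_def)
qed

lemma walk_reach: "is_walk E p \<Longrightarrow> reach E (length p - 1) (hd p) (last p)"
proof (induction p)
  case Nil thus ?case by (simp add: is_walk_def)
next
  case (Cons x p)
  show ?case
  proof (cases "p = []")
    case True thus ?thesis by (simp add: reach.r0)
  next
    case False
    with Cons.prems have e: "E x (hd p)" and w: "is_walk E p" by (auto simp: is_walk_Cons)
    from Cons.IH[OF w] have "reach E (length p - 1) (hd p) (last p)" .
    with e have "reach E (Suc (length p - 1)) x (last p)" by (rule reach.rs)
    with False show ?thesis by simp
  qed
qed

lemma reach_walk: "reach E k x y \<Longrightarrow> \<exists>j\<le>k. \<exists>p. is_walk E p \<and> hd p = x \<and> last p = y \<and> length p = Suc j"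
proof (induction rule: reach.induct)
  case (r0 k x) show ?case by (rule exI[of _ 0]) (auto intro!: exI[of _ "[x]"] simp: is_walk_def)
next
  case (rs x z k y)
  then obtain j p where "j \<le> k" "is_walk E p" "hd p = z" "last p = y" "length p = Suc j" by blast
  then show ?case using rs.hyps(1)
    by (intro exI[of _ "Suc j"]) (auto intro!: exI[of _ "x # p"] simp: is_walk_Cons)
qed

lemma Least_within: "(LEAST k::nat. P k) = (LEAST k. \<exists>j\<le>k. P j)"
proof (cases "\<exists>k. P k")
  case True
  show ?thesis
  proof (rule Least_equality[symmetric])
    show "\<exists>j\<le>(LEAST k. P k). P j" using True LeastI_ex by blast
    show "\<And>y. \<exists>j\<le>y. P j \<Longrightarrow> (LEAST k. P k) \<le> y" by (meson Least_le le_trans)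
  qed
next
  case False thus ?thesis by simp
qed

lemma gdist_reach: "gdist E x y = (LEAST k. reach E k x y)"
proof -
  have "\<And>k. reach E k x y \<longleftrightarrow> (\<exists>j\<le>k. \<exists>p. is_walk E p \<and> hd p = x \<and> last p = y \<and> length p = Suc j)"
  proof
    fix k assume "reach E k x y" thus "\<exists>j\<le>k. \<exists>p. is_walk E p \<and> hd p = x \<and> last p = y \<and> length p = Suc j"
      by (rule reach_walk)
  next
    fix k assume "\<exists>j\<le>k. \<exists>p. is_walk E p \<and> hd p = x \<and> last p = y \<and> length p = Suc j"
    then obtain j p where "j \<le> k" "is_walk E p" "hd p = x" "last p = y" "length p = Suc j" by blast
    thus "reach E k x y" using walk_reach[of E p] reach_mono by fastforce
  qed
  thus ?thesis unfolding gdist_def using Least_within by simp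
qed



definition Dst :: "('a \<Rightarrow> 'a \<Rightarrow> bool) \<Rightarrow> 'a set \<Rightarrow> 'a set \<Rightarrow> nat" where
  "Dst E P Q = (LEAST k. \<exists>p\<in>P. \<exists>q\<in>Q. reach E k p q)"

lemma gdist_Dst: "gdist E x y = Dst E {x} {y}"
  by (simp add: gdist_reach Dst_def)

lemma Dst_le: "p\<in>P \<Longrightarrow> q\<in>Q \<Longrightarrow> reach E k p q \<Longrightarrow> Dst E P Q \<le> k"
proof -
  assume "p\<in>P" "q\<in>Q" "reach E k p q"
  hence "\<exists>p\<in>P. \<exists>q\<in>Q. reach E k p q" by blast
  thus ?thesis unfolding Dst_def by (rule Least_le)
qed

lemma Dst_ex: "p\<in>P \<Longrightarrow> q\<in>Q \<Longrightarrow> reach E k p q \<Longrightarrow> \<exists>p\<in>P. \<exists>q\<in>Q. reach E (Dst E P Q) p q"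
proof -
  assume "p\<in>P" "q\<in>Q" "reach E k p q"
  hence "\<exists>p\<in>P. \<exists>q\<in>Q. reach E k p q" by blast
  thus ?thesis unfolding Dst_def by (rule LeastI)
qed

definition conn :: "('a \<Rightarrow> 'a \<Rightarrow> bool) \<Rightarrow> 'a set \<Rightarrow> bool" where
  "conn E V \<longleftrightarrow> (\<forall>x\<in>V. \<forall>y\<in>V. \<exists>k. reach E k x y)"

lemma Dst_ex2: "conn E V \<Longrightarrow> P \<subseteq> V \<Longrightarrow> Q \<subseteq> V \<Longrightarrow> P \<noteq> {} \<Longrightarrow> Q \<noteq> {} \<Longrightarrow>
  \<exists>p\<in>P. \<exists>q\<in>Q. reach E (Dst E P Q) p q"
proof -
  assume a: "conn E V" "P \<subseteq> V" "Q \<subseteq> V" "P \<noteq> {}" "Q \<noteq> {}"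
  then obtain p q where "p \<in> P" "q \<in> Q" by blast
  with a obtain k where "reach E k p q" unfolding conn_def by blast
  from Dst_ex[OF \<open>p \<in> P\<close> \<open>q \<in> Q\<close> this] show ?thesis .
qed

lemma Dst_sym: "symE E \<Longrightarrow> Dst E P Q = Dst E Q P"
proof -
  assume s: "symE E"
  have eq: "\<And>k. (\<exists>p\<in>P. \<exists>q\<in>Q. reach E k p q) = (\<exists>q\<in>Q. \<exists>p\<in>P. reach E k q p)"
  proof
    fix k assume "\<exists>p\<in>P. \<exists>q\<in>Q. reach E k p q"
    then obtain p q where "p\<in>P" "q\<in>Q" "reach E k p q" by blast
    thus "\<exists>q\<in>Q. \<exists>p\<in>P. reach E k q p" using reach_sym[OF s] by blast
  next
    fix k assume "\<exists>q\<in>Q. \<exists>p\<in>P. reach E k q p"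
    then obtain p q where "p\<in>P" "q\<in>Q" "reach E k q p" by blast
    thus "\<exists>p\<in>P. \<exists>q\<in>Q. reach E k p q" using reach_sym[OF s] by blast
  qed
  have "(\<lambda>k. \<exists>p\<in>P. \<exists>q\<in>Q. reach E k p q) = (\<lambda>k. \<exists>q\<in>Q. \<exists>p\<in>P. reach E k q p)"
    by (rule ext) (rule eq)
  thus ?thesis unfolding Dst_def by (rule arg_cong)
qed

definition clq :: "('a \<Rightarrow> 'a \<Rightarrow> bool) \<Rightarrow> 'a set \<Rightarrow> bool" where
  "clq E X \<longleftrightarrow> X \<noteq> {} \<and> (\<forall>x\<in>X. \<forall>y\<in>X. x = y \<or> E x y)"

definition cr :: "('a \<Rightarrow> 'a \<Rightarrow> bool) \<Rightarrow> 'a set \<Rightarrow> 'a set \<Rightarrow> 'a set \<Rightarrow> bool" where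
  "cr E X P Q \<longleftrightarrow> Dst E P X + Dst E Q X \<le> Dst E P Q"

definition sep :: "('a \<Rightarrow> 'a \<Rightarrow> bool) \<Rightarrow> 'a set \<Rightarrow> 'a set \<Rightarrow> 'a set \<Rightarrow> 'a set \<Rightarrow> 'a set \<Rightarrow> bool" where
  "sep E X P Q R T \<longleftrightarrow> cr E X P R \<and> cr E X P T \<and> cr E X Q R \<and> cr E X Q T"

definition Q4 :: "'a set \<Rightarrow> ('a \<Rightarrow> 'a \<Rightarrow> bool) \<Rightarrow> 'a set \<Rightarrow> 'a set \<Rightarrow> 'a set \<Rightarrow> 'a set \<Rightarrow> bool" where
  "Q4 V E P Q R T \<longleftrightarrow> (\<exists>X. X \<subseteq> V \<and> clq E X \<and>
     (sep E X P Q R T \<or> sep E X P R Q T \<or> sep E X P T Q R))"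

definition fam :: "'a set set \<Rightarrow> 'a set set" where
  "fam Sig = {K. K \<noteq> {} \<and> (\<exists>\<sigma>\<in>Sig. K \<subseteq> \<sigma>)}"

definition ginv :: "'a set \<Rightarrow> ('a \<Rightarrow> 'a \<Rightarrow> bool) \<Rightarrow> 'a set set \<Rightarrow> bool" where
  "ginv V E Sig \<longleftrightarrow> symE E \<and> (\<forall>x y. E x y \<longrightarrow> x \<in> V \<and> y \<in> V) \<and>
     (\<forall>\<sigma>\<in>Sig. \<sigma> \<subseteq> V \<and> clq E \<sigma>) \<and> (\<forall>v\<in>V. \<exists>\<sigma>\<in>Sig. v \<in> \<sigma>) \<and> conn E V \<and>
     (\<forall>P\<in>fam Sig. \<forall>Q\<in>fam Sig. \<forall>R\<in>fam Sig. \<forall>T\<in>fam Sig. Q4 V E P Q R T)"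

lemma cr_sym: "symE E \<Longrightarrow> cr E X P Q = cr E X Q P"
  unfolding cr_def using Dst_sym by (metis add.commute)

lemma Q4_swap12: "symE E \<Longrightarrow> Q4 V E P Q R T \<Longrightarrow> Q4 V E Q P R T"
proof -
  assume s: "symE E" and q: "Q4 V E P Q R T"
  from q obtain X where X: "X \<subseteq> V" "clq E X" "sep E X P Q R T \<or> sep E X P R Q T \<or> sep E X P T Q R"
    unfolding Q4_def by blast
  have a: "sep E X P Q R T \<Longrightarrow> sep E X Q P R T" unfolding sep_def by blast
  have b: "sep E X P R Q T \<Longrightarrow> sep E X Q T P R" unfolding sep_def using cr_sym[OF s] by auto
  have c: "sep E X P T Q R \<Longrightarrow> sep E X Q R P T" unfolding sep_def using cr_sym[OF s] by auto
  show ?thesis unfolding Q4_def using X a b c by blast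
qed
lemma Q4_swap23: "Q4 V E P Q R T \<Longrightarrow> Q4 V E P R Q T"
  unfolding Q4_def sep_def by blast
lemma Q4_swap34: "Q4 V E P Q R T \<Longrightarrow> Q4 V E P Q T R"
  unfolding Q4_def sep_def by blast

lemma cr_sub:
  assumes "symE E" "conn E V" "P \<subseteq> X" "P \<noteq> {}" "X \<subseteq> V" "Q \<subseteq> V" "Q \<noteq> {}"
  shows "cr E X P Q \<and> cr E X Q P"
proof -
  obtain p where p: "p \<in> P" using assms(4) by blast
  have pX: "p \<in> X" using p assms(3) by blast
  have "Dst E P X \<le> 0" by (rule Dst_le[OF p pX reach.r0])
  hence d0: "Dst E P X = 0" by simp
  have PV: "P \<subseteq> V" using assms(3) assms(5) by blast
  obtain q p' where qp: "q \<in> Q" "p' \<in> P" "reach E (Dst E Q P) q p'"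
    using Dst_ex2[OF assms(2) assms(6) PV assms(7) assms(4)] by blast
  have "p' \<in> X" using qp(2) assms(3) by blast
  hence "Dst E Q X \<le> Dst E Q P" by (rule Dst_le[OF qp(1) _ qp(3)])
  thus ?thesis unfolding cr_def using d0 Dst_sym[OF assms(1), of P Q] by simp
qed

lemma Dst_upper:
  assumes "symE E" "conn E V" "X \<subseteq> V" "clq E X" "Y \<in> V" "Z \<in> V"
  shows "Dst E {Y} {Z} \<le> Dst E {Y} X + 1 + Dst E {Z} X"
proof -
  have Xne: "X \<noteq> {}" using assms(4) by (simp add: clq_def)
  have YV: "{Y} \<subseteq> V" "{Y} \<noteq> {}" and ZV: "{Z} \<subseteq> V" "{Z} \<noteq> {}" using assms(5,6) by auto
  obtain x1 where x1: "x1 \<in> X" "reach E (Dst E {Y} X) Y x1"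
    using Dst_ex2[OF assms(2) YV(1) assms(3) YV(2) Xne] by blast
  obtain x2 where x2: "x2 \<in> X" "reach E (Dst E {Z} X) Z x2"
    using Dst_ex2[OF assms(2) ZV(1) assms(3) ZV(2) Xne] by blast
  have r2: "reach E (Dst E {Z} X) x2 Z" using reach_sym[OF assms(1) x2(2)] .
  have r12: "reach E 1 x1 x2"
  proof (cases "x1 = x2")
    case True thus ?thesis by (simp add: reach.r0)
  next
    case False
    hence "E x1 x2" using assms(4) x1(1) x2(1) unfolding clq_def by blast
    thus ?thesis using reach_edge[of E x1 x2 0] by simp
  qed
  have "reach E (Dst E {Y} X + 1 + Dst E {Z} X) Y Z"
    using reach_trans[OF reach_trans[OF x1(2) r12] r2] .
  thus ?thesis by (rule Dst_le[OF singletonI singletonI])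
qed

lemma ginv_init:
  assumes "finite V0" "card V0 \<ge> 2"
  shows "ginv V0 (\<lambda>x y. x \<in> V0 \<and> y \<in> V0 \<and> x \<noteq> y) {V0}"
proof -
  let ?E = "\<lambda>x y. x \<in> V0 \<and> y \<in> V0 \<and> x \<noteq> y"
  have ne: "V0 \<noteq> {}" using assms by auto
  have s: "symE ?E" by (auto simp: symE_def)
  have c: "conn ?E V0"
    unfolding conn_def
  proof (intro ballI)
    fix x y assume "x \<in> V0" "y \<in> V0"
    thus "\<exists>k. reach ?E k x y"
      by (cases "x = y") (auto intro: reach.r0 reach_edge[where k=0])
  qed
  have cl: "clq ?E V0" using ne by (auto simp: clq_def)
  have "Q4 V0 ?E P Q R T" if "P \<in> fam {V0}" "Q \<in> fam {V0}" "R \<in> fam {V0}" "T \<in> fam {V0}" for P Q R T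
  proof -
    have "\<And>K L. K \<in> fam {V0} \<Longrightarrow> L \<in> fam {V0} \<Longrightarrow> cr ?E V0 K L"
      using cr_sub[OF s c] by (auto simp: fam_def)
    hence "sep ?E V0 P Q R T" using that unfolding sep_def by blast
    thus ?thesis using cl unfolding Q4_def by blast
  qed
  hence q: "\<forall>P\<in>fam {V0}. \<forall>Q\<in>fam {V0}. \<forall>R\<in>fam {V0}. \<forall>T\<in>fam {V0}. Q4 V0 ?E P Q R T" by blast
  have a1: "\<forall>\<sigma>\<in>{V0}. \<sigma> \<subseteq> V0 \<and> clq ?E \<sigma>" using cl by simp
  have a2: "\<forall>v\<in>V0. \<exists>\<sigma>\<in>{V0}. v \<in> \<sigma>" by simp
  have a3: "\<forall>x y. ?E x y \<longrightarrow> x \<in> V0 \<and> y \<in> V0" by simp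
  show ?thesis unfolding ginv_def by (intro conjI s a1 a2 a3 c q)
qed



definition gext :: "('a \<Rightarrow> 'a \<Rightarrow> bool) \<Rightarrow> 'a set \<Rightarrow> 'a set \<Rightarrow> 'a \<Rightarrow> 'a \<Rightarrow> bool" where
  "gext E S N x y \<longleftrightarrow> E x y \<or> (x \<in> S \<union> N \<and> y \<in> S \<union> N \<and> x \<noteq> y)"

context
  fixes V :: "'a set" and E :: "'a \<Rightarrow> 'a \<Rightarrow> bool" and Sig :: "'a set set" and \<sigma> :: "'a set"
    and S :: "'a set" and N :: "'a set"
  assumes gi: "ginv V E Sig" and sig: "\<sigma> \<in> Sig" and SS: "S \<subseteq> \<sigma>" and Sne: "S \<noteq> {}"
    and dis: "N \<inter> V = {}"
begin

lemma symE0: "symE E" using gi by (simp add: ginv_def)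
lemma EV: "E x y \<Longrightarrow> x \<in> V \<and> y \<in> V" using gi by (simp add: ginv_def)
lemma sigV: "\<tau> \<in> Sig \<Longrightarrow> \<tau> \<subseteq> V \<and> clq E \<tau>" using gi by (simp add: ginv_def)
lemma cover: "v \<in> V \<Longrightarrow> \<exists>\<tau>\<in>Sig. v \<in> \<tau>" using gi by (simp add: ginv_def)
lemma conn0: "conn E V" using gi by (simp add: ginv_def)
lemma Q40: "P \<in> fam Sig \<Longrightarrow> Q \<in> fam Sig \<Longrightarrow> R \<in> fam Sig \<Longrightarrow> T \<in> fam Sig \<Longrightarrow> Q4 V E P Q R T"
  using gi by (simp add: ginv_def)

lemma SV: "S \<subseteq> V" using sigV[OF sig] SS by blast
lemma sclq: "s \<in> S \<Longrightarrow> s' \<in> S \<Longrightarrow> s = s' \<or> E s s'"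
  using sigV[OF sig] SS unfolding clq_def by blast

lemma symE1: "symE (gext E S N)" using symE0 unfolding symE_def gext_def by blast
lemma E1V: "gext E S N x y \<Longrightarrow> x \<in> V \<union> N \<and> y \<in> V \<union> N"
  using EV SV unfolding gext_def by blast

lemma famV: "W \<in> fam Sig \<Longrightarrow> W \<subseteq> V \<and> W \<noteq> {}"
  using sigV unfolding fam_def by blast

lemma old_reach:
  assumes "x \<in> V" "y \<in> V"
  shows "reach (gext E S N) k x y \<longleftrightarrow> reach E k x y"
proof
  obtain s where s: "s \<in> S" using Sne by blast
  let ?h = "\<lambda>a. if a \<in> N then s else a"
  assume r: "reach (gext E S N) k x y"
  have "reach E k (?h x) (?h y)"
  proof (rule reach_hom[OF _ r])
    fix a b assume h: "gext E S N a b"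
    show "E (?h a) (?h b) \<or> ?h a = ?h b"
    proof (cases "E a b")
      case True
      then have "a \<in> V" "b \<in> V" using EV by auto
      hence "a \<notin> N" "b \<notin> N" using dis by auto
      thus ?thesis using True by simp
    next
      case False
      with h have "a \<in> S \<union> N" "b \<in> S \<union> N" unfolding gext_def by auto
      hence "?h a \<in> S" "?h b \<in> S" using s by auto
      thus ?thesis using sclq by blast
    qed
  qed
  moreover have "x \<notin> N" "y \<notin> N" using assms dis by auto
  ultimately show "reach E k x y" by simp
next
  assume "reach E k x y"
  thus "reach (gext E S N) k x y" by (rule reach_subE[rotated]) (simp add: gext_def)
qed

lemma old_Dst:
  assumes "P \<subseteq> V" "Q \<subseteq> V"
  shows "Dst (gext E S N) P Q = Dst E P Q"
proof -
  have eq: "reach (gext E S N) k p q = reach E k p q" if "p \<in> P" "q \<in> Q" for k p q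
    using old_reach[of p q k] that assms by blast
  have "(\<lambda>k. \<exists>p\<in>P. \<exists>q\<in>Q. reach (gext E S N) k p q) = (\<lambda>k. \<exists>p\<in>P. \<exists>q\<in>Q. reach E k p q)"
  proof (rule ext)
    fix k show "(\<exists>p\<in>P. \<exists>q\<in>Q. reach (gext E S N) k p q) = (\<exists>p\<in>P. \<exists>q\<in>Q. reach E k p q)"
      using eq by (metis)
  qed
  thus ?thesis unfolding Dst_def by (rule arg_cong)
qed

lemma conn1: "conn (gext E S N) (V \<union> N)"
proof -
  obtain s0 where s0: "s0 \<in> S" using Sne by blast
  have s0V: "s0 \<in> V" using s0 SV by blast
  have to: "\<exists>k. reach (gext E S N) k x s0" if "x \<in> V \<union> N" for x
  proof (cases "x \<in> V")
    case True
    then obtain k where "reach E k x s0" using conn0 s0V unfolding conn_def by blast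
    hence "reach (gext E S N) k x s0" by (rule reach_subE[rotated]) (simp add: gext_def)
    thus ?thesis by blast
  next
    case False
    hence "x \<in> N" using that by blast
    hence "x \<noteq> s0" using s0V dis by blast
    hence "gext E S N x s0" using \<open>x \<in> N\<close> s0 unfolding gext_def by blast
    from reach_edge[of "gext E S N" x s0 0, OF this] show ?thesis by blast
  qed
  show ?thesis unfolding conn_def
  proof (intro ballI)
    fix x y assume "x \<in> V \<union> N" "y \<in> V \<union> N"
    then obtain k1 k2 where h1: "reach (gext E S N) k1 x s0" and h2: "reach (gext E S N) k2 y s0"
      using to by blast
    have "reach (gext E S N) k2 s0 y" using reach_sym[OF symE1 h2] .
    from reach_trans[OF h1 this] show "\<exists>k. reach (gext E S N) k x y" by blast
  qed
qed

lemma exitN: "reach (gext E S N) k x y \<Longrightarrow> x \<in> N \<Longrightarrow> y \<notin> N \<Longrightarrow>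
  \<exists>s\<in>S. \<exists>k'. k = Suc k' \<and> reach (gext E S N) k' s y"
proof (induction rule: reach.induct)
  case (r0 k x) thus ?case by simp
next
  case (rs x z k y)
  show ?case
  proof (cases "z \<in> N")
    case True
    from rs.IH[OF True rs.prems(2)] obtain s k' where h: "s \<in> S" "k = Suc k'" "reach (gext E S N) k' s y"
      by blast
    have "reach (gext E S N) k s y" using reach_mono[OF h(3)] h(2) by simp
    thus ?thesis using h(1) by blast
  next
    case False
    have "x \<notin> V" using rs.prems(1) dis by blast
    hence "\<not> E x z" using EV by blast
    hence "z \<in> S" using rs.hyps(1) False unfolding gext_def by blast
    thus ?thesis using rs.hyps(2) by blast
  qed
qed

lemma lowK:
  assumes K: "K \<noteq> {}" "K \<subseteq> S \<union> N" and W: "W \<subseteq> V" "W \<noteq> {}"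
  shows "(if K \<inter> S = {} then 1 else 0) + Dst E (if K \<inter> S = {} then S else K \<inter> S) W
     \<le> Dst (gext E S N) K W"
proof -
  have KV: "K \<subseteq> V \<union> N" using K SV by blast
  have WV: "W \<subseteq> V \<union> N" using W by blast
  obtain k w where kw: "k \<in> K" "w \<in> W" "reach (gext E S N) (Dst (gext E S N) K W) k w"
    using Dst_ex2[OF conn1 KV WV K(1) W(2)] by blast
  have wV: "w \<in> V" "w \<notin> N" using kw(2) W dis by auto
  show ?thesis
  proof (cases "k \<in> N")
    case True
    from exitN[OF kw(3) True wV(2)] obtain s j' where sj: "s \<in> S" "Dst (gext E S N) K W = Suc j'"
      "reach (gext E S N) j' s w" by blast
    have sV: "s \<in> V" using sj(1) SV by blast
    have rj: "reach E j' s w" using sj(3) old_reach[OF sV wV(1)] by simp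
    show ?thesis
    proof (cases "K \<inter> S = {}")
      case True
      have "Dst E S W \<le> j'" by (rule Dst_le[OF sj(1) kw(2) rj])
      thus ?thesis using True sj(2) by simp
    next
      case False
      then obtain s' where s': "s' \<in> K \<inter> S" by blast
      have "reach E (Suc j') s' w"
      proof (cases "s' = s")
        case True thus ?thesis using reach_mono[OF rj] by simp
      next
        case False
        hence "E s' s" using sclq[of s' s] s' sj(1) by blast
        thus ?thesis using rj by (rule reach.rs)
      qed
      hence "Dst E (K \<inter> S) W \<le> Suc j'" by (rule Dst_le[OF s' kw(2)])
      thus ?thesis using False sj(2) by simp
    qed
  next
    case False
    hence kS: "k \<in> K \<inter> S" using kw(1) K(2) by blast
    have kV: "k \<in> V" using kS SV by blast
    have "reach E (Dst (gext E S N) K W) k w" using kw(3) old_reach[OF kV wV(1)] by simp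
    hence "Dst E (K \<inter> S) W \<le> Dst (gext E S N) K W" by (rule Dst_le[OF kS kw(2)])
    moreover have "K \<inter> S \<noteq> {}" using kS by blast
    ultimately show ?thesis by simp
  qed
qed

lemma upK:
  assumes K: "K \<noteq> {}" "K \<subseteq> S \<union> N" and X: "X \<subseteq> V" "X \<noteq> {}"
  shows "Dst (gext E S N) K X \<le>
    (if K \<inter> S = {} then 1 else 0) + Dst E (if K \<inter> S = {} then S else K \<inter> S) X"
proof (cases "K \<inter> S = {}")
  case True
  obtain s x where sx: "s \<in> S" "x \<in> X" "reach E (Dst E S X) s x"
    using Dst_ex2[OF conn0 SV X(1) Sne X(2)] by blast
  obtain k where k: "k \<in> K" using K(1) by blast
  have kN: "k \<in> N" using k K(2) True by blast
  have "k \<noteq> s" using kN sx(1) SV dis by blast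
  hence e: "gext E S N k s" using kN sx(1) unfolding gext_def by blast
  have "reach (gext E S N) (Dst E S X) s x" using sx(3) by (rule reach_subE[rotated]) (simp add: gext_def)
  hence "reach (gext E S N) (Suc (Dst E S X)) k x" using e by (intro reach.rs)
  hence "Dst (gext E S N) K X \<le> Suc (Dst E S X)" by (rule Dst_le[OF k sx(2)])
  thus ?thesis using True by simp
next
  case False
  have KSV: "K \<inter> S \<subseteq> V" using SV by blast
  obtain p x where px: "p \<in> K \<inter> S" "x \<in> X" "reach E (Dst E (K \<inter> S) X) p x"
    using Dst_ex2[OF conn0 KSV X(1) False X(2)] by blast
  have "reach (gext E S N) (Dst E (K \<inter> S) X) p x" using px(3) by (rule reach_subE[rotated]) (simp add: gext_def)
  hence "Dst (gext E S N) K X \<le> Dst E (K \<inter> S) X" using px(1) by (intro Dst_le[OF _ px(2)]) auto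
  thus ?thesis using False by simp
qed

lemma clq_old: "clq E X \<Longrightarrow> clq (gext E S N) X"
  unfolding clq_def gext_def by blast

lemma cr_old:
  assumes "W \<subseteq> V" "W' \<subseteq> V" "X \<subseteq> V" "cr E X W W'"
  shows "cr (gext E S N) X W W'"
  using assms(4) unfolding cr_def
  using old_Dst[OF assms(1) assms(3)] old_Dst[OF assms(2) assms(3)] old_Dst[OF assms(1) assms(2)] by simp

lemma one_new:
  assumes K: "K \<noteq> {}" "K \<subseteq> S \<union> N" and A: "A \<in> fam Sig" "B \<in> fam Sig" "C \<in> fam Sig"
  shows "Q4 (V \<union> N) (gext E S N) K A B C"
proof -
  define \<pi> where "\<pi> = (if K \<inter> S = {} then S else K \<inter> S)"
  define e where "e = (if K \<inter> S = {} then 1::nat else 0)"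
  have \<pi>f: "\<pi> \<in> fam Sig" using Sne SS sig unfolding \<pi>_def fam_def by auto
  obtain X where X: "X \<subseteq> V" "clq E X" "sep E X \<pi> A B C \<or> sep E X \<pi> B A C \<or> sep E X \<pi> C A B"
    using Q40[OF \<pi>f A] unfolding Q4_def by blast
  have Xne: "X \<noteq> {}" using X(2) clq_def by blast
  have XV1: "X \<subseteq> V \<union> N" using X(1) by blast
  have clq1: "clq (gext E S N) X" using X(2) by (rule clq_old)
  have \<pi>V: "\<pi> \<subseteq> V" using famV[OF \<pi>f] by blast
  have newcr: "cr (gext E S N) X K W" if W: "W \<in> fam Sig" "cr E X \<pi> W" for W
  proof -
    have WV: "W \<subseteq> V" "W \<noteq> {}" using famV[OF W(1)] by auto
    have l: "e + Dst E \<pi> W \<le> Dst (gext E S N) K W" using lowK[OF K WV] unfolding e_def \<pi>_def .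
    have u: "Dst (gext E S N) K X \<le> e + Dst E \<pi> X" using upK[OF K X(1) Xne] unfolding e_def \<pi>_def .
    have o: "Dst (gext E S N) W X = Dst E W X" using old_Dst[OF WV(1) X(1)] .
    have c: "Dst E \<pi> X + Dst E W X \<le> Dst E \<pi> W" using W(2) unfolding cr_def .
    show ?thesis unfolding cr_def using l u o c by linarith
  qed
  have newcr2: "cr (gext E S N) X W K" if "W \<in> fam Sig" "cr E X \<pi> W" for W
    using newcr[OF that] cr_sym[OF symE1] by blast
  have oc: "cr (gext E S N) X W W'" if "W \<in> fam Sig" "W' \<in> fam Sig" "cr E X W W'" for W W'
    using cr_old[OF _ _ X(1) that(3)] famV[OF that(1)] famV[OF that(2)] by blast
  from X(3) have "sep (gext E S N) X K A B C \<or> sep (gext E S N) X K B A C \<or> sep (gext E S N) X K C A B"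
  proof (elim disjE)
    assume h: "sep E X \<pi> A B C"
    have "sep (gext E S N) X K A B C" using h unfolding sep_def
      using newcr[OF A(2)] newcr[OF A(3)] oc[OF A(1) A(2)] oc[OF A(1) A(3)] by blast
    thus ?thesis by blast
  next
    assume h: "sep E X \<pi> B A C"
    have "sep (gext E S N) X K B A C" using h unfolding sep_def
      using newcr[OF A(1)] newcr[OF A(3)] oc[OF A(2) A(1)] oc[OF A(2) A(3)] by blast
    thus ?thesis by blast
  next
    assume h: "sep E X \<pi> C A B"
    have "sep (gext E S N) X K C A B" using h unfolding sep_def
      using newcr[OF A(1)] newcr[OF A(2)] oc[OF A(3) A(1)] oc[OF A(3) A(2)] by blast
    thus ?thesis by blast
  qed
  thus ?thesis unfolding Q4_def using XV1 clq1 by blast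
qed

lemma crX:
  assumes "A \<subseteq> V \<union> N" "B \<subseteq> V \<union> N" "A \<noteq> {}" "B \<noteq> {}" "A \<subseteq> S \<union> N"
  shows "cr (gext E S N) (S \<union> N) A B \<and> cr (gext E S N) (S \<union> N) B A"
proof -
  have "S \<union> N \<subseteq> V \<union> N" using SV by blast
  thus ?thesis using cr_sub[OF symE1 conn1 assms(5) assms(3) _ assms(2) assms(4)] by blast
qed

lemma sepX0:
  assumes "P \<subseteq> V \<union> N" "Q \<subseteq> V \<union> N" "R \<subseteq> V \<union> N" "T \<subseteq> V \<union> N"
    "P \<noteq> {}" "Q \<noteq> {}" "R \<noteq> {}" "T \<noteq> {}"
    and h: "(P \<subseteq> S \<union> N \<and> Q \<subseteq> S \<union> N) \<or> (R \<subseteq> S \<union> N \<and> T \<subseteq> S \<union> N)"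
  shows "sep (gext E S N) (S \<union> N) P Q R T"
  using h
proof
  assume h1: "P \<subseteq> S \<union> N \<and> Q \<subseteq> S \<union> N"
  have "cr (gext E S N) (S \<union> N) P R" using crX[OF assms(1) assms(3) assms(5) assms(7)] h1 by blast
  moreover have "cr (gext E S N) (S \<union> N) P T" using crX[OF assms(1) assms(4) assms(5) assms(8)] h1 by blast
  moreover have "cr (gext E S N) (S \<union> N) Q R" using crX[OF assms(2) assms(3) assms(6) assms(7)] h1 by blast
  moreover have "cr (gext E S N) (S \<union> N) Q T" using crX[OF assms(2) assms(4) assms(6) assms(8)] h1 by blast
  ultimately show ?thesis unfolding sep_def by blast
next
  assume h1: "R \<subseteq> S \<union> N \<and> T \<subseteq> S \<union> N"
  have "cr (gext E S N) (S \<union> N) P R" using crX[OF assms(3) assms(1) assms(7) assms(5)] h1 by blast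
  moreover have "cr (gext E S N) (S \<union> N) P T" using crX[OF assms(4) assms(1) assms(8) assms(5)] h1 by blast
  moreover have "cr (gext E S N) (S \<union> N) Q R" using crX[OF assms(3) assms(2) assms(7) assms(6)] h1 by blast
  moreover have "cr (gext E S N) (S \<union> N) Q T" using crX[OF assms(4) assms(2) assms(8) assms(6)] h1 by blast
  ultimately show ?thesis unfolding sep_def by blast
qed

lemma clqSN: "clq (gext E S N) (S \<union> N)"
  using Sne unfolding clq_def gext_def by blast

lemma many:
  assumes "P \<subseteq> V \<union> N" "Q \<subseteq> V \<union> N" "R \<subseteq> V \<union> N" "T \<subseteq> V \<union> N"
    "P \<noteq> {}" "Q \<noteq> {}" "R \<noteq> {}" "T \<noteq> {}"
    and h: "(P \<subseteq> S \<union> N \<and> Q \<subseteq> S \<union> N) \<or> (R \<subseteq> S \<union> N \<and> T \<subseteq> S \<union> N) \<or>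
            (P \<subseteq> S \<union> N \<and> R \<subseteq> S \<union> N) \<or> (Q \<subseteq> S \<union> N \<and> T \<subseteq> S \<union> N) \<or>
            (P \<subseteq> S \<union> N \<and> T \<subseteq> S \<union> N) \<or> (Q \<subseteq> S \<union> N \<and> R \<subseteq> S \<union> N)"
  shows "Q4 (V \<union> N) (gext E S N) P Q R T"
proof -
  have SNV: "S \<union> N \<subseteq> V \<union> N" using SV by blast
  have "sep (gext E S N) (S \<union> N) P Q R T \<or> sep (gext E S N) (S \<union> N) P R Q T \<or> sep (gext E S N) (S \<union> N) P T Q R"
    using h
  proof (elim disjE)
    assume "P \<subseteq> S \<union> N \<and> Q \<subseteq> S \<union> N"
    thus ?thesis using sepX0[OF assms(1-8)] by blast
  next
    assume "R \<subseteq> S \<union> N \<and> T \<subseteq> S \<union> N"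
    thus ?thesis using sepX0[OF assms(1-8)] by blast
  next
    assume "P \<subseteq> S \<union> N \<and> R \<subseteq> S \<union> N"
    thus ?thesis using sepX0[OF assms(1) assms(3) assms(2) assms(4) assms(5) assms(7) assms(6) assms(8)] by blast
  next
    assume "Q \<subseteq> S \<union> N \<and> T \<subseteq> S \<union> N"
    thus ?thesis using sepX0[OF assms(1) assms(3) assms(2) assms(4) assms(5) assms(7) assms(6) assms(8)] by blast
  next
    assume "P \<subseteq> S \<union> N \<and> T \<subseteq> S \<union> N"
    thus ?thesis using sepX0[OF assms(1) assms(4) assms(2) assms(3) assms(5) assms(8) assms(6) assms(7)] by blast
  next
    assume "Q \<subseteq> S \<union> N \<and> R \<subseteq> S \<union> N"
    thus ?thesis using sepX0[OF assms(1) assms(4) assms(2) assms(3) assms(5) assms(8) assms(6) assms(7)] by blast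
  qed
  thus ?thesis unfolding Q4_def using SNV clqSN by blast
qed

lemma Q4_old:
  assumes "P \<in> fam Sig" "Q \<in> fam Sig" "R \<in> fam Sig" "T \<in> fam Sig"
  shows "Q4 (V \<union> N) (gext E S N) P Q R T"
proof -
  obtain X where X: "X \<subseteq> V" "clq E X" "sep E X P Q R T \<or> sep E X P R Q T \<or> sep E X P T Q R"
    using Q40[OF assms] unfolding Q4_def by blast
  have V: "P \<subseteq> V" "Q \<subseteq> V" "R \<subseteq> V" "T \<subseteq> V" using famV assms by auto
  have tr: "sep (gext E S N) X A B C D" if "A \<subseteq> V" "B \<subseteq> V" "C \<subseteq> V" "D \<subseteq> V" "sep E X A B C D" for A B C D
    using that(5) unfolding sep_def
    using cr_old[OF that(1) that(3) X(1)] cr_old[OF that(1) that(4) X(1)]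
      cr_old[OF that(2) that(3) X(1)] cr_old[OF that(2) that(4) X(1)] by blast
  have "sep (gext E S N) X P Q R T \<or> sep (gext E S N) X P R Q T \<or> sep (gext E S N) X P T Q R"
    using X(3) tr[OF V(1) V(2) V(3) V(4)] tr[OF V(1) V(3) V(2) V(4)] tr[OF V(1) V(4) V(2) V(3)] by blast
  moreover have "X \<subseteq> V \<union> N" using X(1) by blast
  ultimately show ?thesis unfolding Q4_def using clq_old[OF X(2)] by blast
qed

lemma fam_cls:
  assumes "K \<in> fam (insert (S \<union> N) Sig)"
  shows "K \<in> fam Sig \<or> (K \<noteq> {} \<and> K \<subseteq> S \<union> N)"
  using assms unfolding fam_def by auto

lemma fam_sub:
  assumes "K \<in> fam (insert (S \<union> N) Sig)"
  shows "K \<subseteq> V \<union> N \<and> K \<noteq> {}"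
  using assms SV sigV unfolding fam_def by blast

lemma step_inv: "ginv (V \<union> N) (gext E S N) (insert (S \<union> N) Sig)"
proof -
  let ?S' = "insert (S \<union> N) Sig"
  let ?E' = "gext E S N"
  have q: "Q4 (V \<union> N) ?E' P Q R T"
    if h: "P \<in> fam ?S'" "Q \<in> fam ?S'" "R \<in> fam ?S'" "T \<in> fam ?S'" for P Q R T
  proof -
    have sP: "P \<subseteq> V \<union> N" "P \<noteq> {}" using fam_sub[OF h(1)] by auto
    have sQ: "Q \<subseteq> V \<union> N" "Q \<noteq> {}" using fam_sub[OF h(2)] by auto
    have sR: "R \<subseteq> V \<union> N" "R \<noteq> {}" using fam_sub[OF h(3)] by auto
    have sT: "T \<subseteq> V \<union> N" "T \<noteq> {}" using fam_sub[OF h(4)] by auto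
    have cP: "P \<in> fam Sig \<or> P \<subseteq> S \<union> N" using fam_cls[OF h(1)] by blast
    have cQ: "Q \<in> fam Sig \<or> Q \<subseteq> S \<union> N" using fam_cls[OF h(2)] by blast
    have cR: "R \<in> fam Sig \<or> R \<subseteq> S \<union> N" using fam_cls[OF h(3)] by blast
    have cT: "T \<in> fam Sig \<or> T \<subseteq> S \<union> N" using fam_cls[OF h(4)] by blast
    have L2: "Q4 (V \<union> N) ?E' P Q R T" if
      "(P \<subseteq> S \<union> N \<and> Q \<subseteq> S \<union> N) \<or> (R \<subseteq> S \<union> N \<and> T \<subseteq> S \<union> N) \<or>
       (P \<subseteq> S \<union> N \<and> R \<subseteq> S \<union> N) \<or> (Q \<subseteq> S \<union> N \<and> T \<subseteq> S \<union> N) \<or>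
       (P \<subseteq> S \<union> N \<and> T \<subseteq> S \<union> N) \<or> (Q \<subseteq> S \<union> N \<and> R \<subseteq> S \<union> N)"
      by (rule many[OF sP(1) sQ(1) sR(1) sT(1) sP(2) sQ(2) sR(2) sT(2) that])
    have L0: "Q4 (V \<union> N) ?E' P Q R T" if "P \<in> fam Sig" "Q \<in> fam Sig" "R \<in> fam Sig" "T \<in> fam Sig"
      by (rule Q4_old[OF that])
    have La: "Q4 (V \<union> N) ?E' P Q R T" if "P \<subseteq> S \<union> N" "Q \<in> fam Sig" "R \<in> fam Sig" "T \<in> fam Sig"
      by (rule one_new[OF sP(2) that])
    have Lb: "Q4 (V \<union> N) ?E' P Q R T" if "P \<in> fam Sig" "Q \<subseteq> S \<union> N" "R \<in> fam Sig" "T \<in> fam Sig"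
      by (rule Q4_swap12[OF symE1 one_new[OF sQ(2) that(2) that(1) that(3) that(4)]])
    have Lc: "Q4 (V \<union> N) ?E' P Q R T" if "P \<in> fam Sig" "Q \<in> fam Sig" "R \<subseteq> S \<union> N" "T \<in> fam Sig"
      by (rule Q4_swap23[OF Q4_swap12[OF symE1 one_new[OF sR(2) that(3) that(1) that(2) that(4)]]])
    have Ld: "Q4 (V \<union> N) ?E' P Q R T" if "P \<in> fam Sig" "Q \<in> fam Sig" "R \<in> fam Sig" "T \<subseteq> S \<union> N"
      by (rule Q4_swap34[OF Q4_swap23[OF Q4_swap12[OF symE1 one_new[OF sT(2) that(4) that(1) that(2) that(3)]]]])
    show ?thesis using cP cQ cR cT L0 La Lb Lc Ld L2 by blast
  qed
  have a1: "\<forall>\<tau>\<in>?S'. \<tau> \<subseteq> V \<union> N \<and> clq ?E' \<tau>"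
    using SV clqSN sigV clq_old by blast
  have a2: "\<forall>v\<in>V \<union> N. \<exists>\<tau>\<in>?S'. v \<in> \<tau>" using cover by blast
  have a3: "\<forall>x y. ?E' x y \<longrightarrow> x \<in> V \<union> N \<and> y \<in> V \<union> N" using E1V by blast
  have a4: "\<forall>P\<in>fam ?S'. \<forall>Q\<in>fam ?S'. \<forall>R\<in>fam ?S'. \<forall>T\<in>fam ?S'. Q4 (V \<union> N) ?E' P Q R T"
    using q by blast
  show ?thesis unfolding ginv_def by (intro conjI symE1 a1 a2 a3 conn1 a4)
qed

end

lemma arith4:
  fixes ab ac ad bc bd cd fa fb fc fd :: nat
  assumes "ab + cd \<le> ac + bd" "ac + bd \<le> ad + bc" "ad \<le> fa + 1 + fd" "bc \<le> fb + 1 + fc"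
    "(fa+fc \<le> ac \<and> fa+fd \<le> ad \<and> fb+fc \<le> bc \<and> fb+fd \<le> bd) \<or>
     (fa+fb \<le> ab \<and> fa+fd \<le> ad \<and> fc+fb \<le> bc \<and> fc+fd \<le> cd) \<or>
     (fa+fb \<le> ab \<and> fa+fc \<le> ac \<and> fd+fb \<le> bd \<and> fd+fc \<le> cd)"
  shows "(real (ad + bc) - real (ac + bd)) / 2 \<le> 1"
proof -
  have "ad + bc \<le> ac + bd + 2" using assms by linarith
  hence "real (ad + bc) \<le> real (ac + bd) + 2" by linarith
  thus ?thesis by simp
qed

theorem mainTheorem1:
  fixes V :: "'a set" and E :: "'a \<Rightarrow> 'a \<Rightarrow> bool" and Sig :: "'a set set"
  assumes "simplex_growth V E Sig"
  shows "connected_graph V E \<and>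
    (\<forall>A\<in>V. \<forall>B\<in>V. \<forall>C\<in>V. \<forall>D\<in>V.
      gdist E A B + gdist E C D \<le> gdist E A C + gdist E B D \<longrightarrow>
      gdist E A C + gdist E B D \<le> gdist E A D + gdist E B C \<longrightarrow>
      (real (gdist E A D + gdist E B C) - real (gdist E A C + gdist E B D)) / 2 \<le> 1)"
proof -
  have I: "ginv V E Sig" using assms
  proof (induction rule: simplex_growth.induct)
    case (init V0) thus ?case by (rule ginv_init)
  next
    case (step V E Sig \<sigma> S n N)
    have Sne: "S \<noteq> {}" using step.hyps(5) by auto
    have "ginv (V \<union> N) (gext E S N) (insert (S \<union> N) Sig)"
      by (rule step_inv[OF step.IH step.hyps(2) step.hyps(3) Sne step.hyps(8)])
    moreover have "gext E S N = (\<lambda>x y. E x y \<or> (x \<in> S \<union> N \<and> y \<in> S \<union> N \<and> x \<noteq> y))"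
      by (intro ext) (simp add: gext_def)
    ultimately show ?case by simp
  qed
  have s: "symE E" and c: "conn E V" and cov: "\<forall>v\<in>V. \<exists>\<sigma>\<in>Sig. v \<in> \<sigma>"
    and q: "\<forall>P\<in>fam Sig. \<forall>Q\<in>fam Sig. \<forall>R\<in>fam Sig. \<forall>T\<in>fam Sig. Q4 V E P Q R T"
    using I unfolding ginv_def by auto
  have fs: "{v} \<in> fam Sig" if "v \<in> V" for v using cov that unfolding fam_def by auto
  have cg: "connected_graph V E" unfolding connected_graph_def
  proof (intro ballI)
    fix x y assume "x \<in> V" "y \<in> V"
    then obtain k where "reach E k x y" using c unfolding conn_def by blast
    from reach_walk[OF this] show "\<exists>p. is_walk E p \<and> hd p = x \<and> last p = y" by blast
  qed
  have gs: "gdist E Y Z = gdist E Z Y" for Y Z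
    unfolding gdist_Dst using Dst_sym[OF s] by blast
  have fp: "(real (gdist E A D + gdist E B C) - real (gdist E A C + gdist E B D)) / 2 \<le> 1"
    if V: "A \<in> V" "B \<in> V" "C \<in> V" "D \<in> V"
      and o1: "gdist E A B + gdist E C D \<le> gdist E A C + gdist E B D"
      and o2: "gdist E A C + gdist E B D \<le> gdist E A D + gdist E B C" for A B C D
  proof -
    have "Q4 V E {A} {B} {C} {D}" using q fs V by blast
    then obtain X where X: "X \<subseteq> V" "clq E X"
      "sep E X {A} {B} {C} {D} \<or> sep E X {A} {C} {B} {D} \<or> sep E X {A} {D} {B} {C}"
      unfolding Q4_def by blast
    define f where "f Y = Dst E {Y} X" for Y
    have crg: "cr E X {Y} {Z} \<longleftrightarrow> f Y + f Z \<le> gdist E Y Z" for Y Z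
      by (simp add: cr_def f_def gdist_Dst)
    have u1: "gdist E A D \<le> f A + 1 + f D"
      unfolding f_def gdist_Dst by (rule Dst_upper[OF s c X(1) X(2) V(1) V(4)])
    have u2: "gdist E B C \<le> f B + 1 + f C"
      unfolding f_def gdist_Dst by (rule Dst_upper[OF s c X(1) X(2) V(2) V(3)])
    have d: "(f A + f C \<le> gdist E A C \<and> f A + f D \<le> gdist E A D \<and> f B + f C \<le> gdist E B C \<and> f B + f D \<le> gdist E B D) \<or>
     (f A + f B \<le> gdist E A B \<and> f A + f D \<le> gdist E A D \<and> f C + f B \<le> gdist E B C \<and> f C + f D \<le> gdist E C D) \<or>
     (f A + f B \<le> gdist E A B \<and> f A + f C \<le> gdist E A C \<and> f D + f B \<le> gdist E B D \<and> f D + f C \<le> gdist E C D)"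
      using X(3) gs[of C B] gs[of D B] gs[of D C] unfolding sep_def crg by auto
    show ?thesis by (rule arith4[OF o1 o2 u1 u2 d])
  qed
  show ?thesis using cg fp by blast
qed

end
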